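(* Let $X$ be a $T_0$ space, $U$ an $SI_2$-open subset of $X$, $x\in X$, and let $\mathcal F$ be a family of sets of the form $\uparrow F$ with $F$ a nonempty finite subset of $X$, such that $\mathcal F$ is an irreducible subset of $P_S(X)$. If $\bigcap\mathcal F\subseteq\uparrow x\subseteq U$, then $F\subseteq U$ for some $\uparrow F\in\mathcal F$.
   Context: For a $T_0$ space $X$, the specialization order is $x\le y$ iff $x\in \mathrm{cl}\{y\}$; $\uparrow A=\{x: a\le x\text{ for some } a\in A\}$, $\uparrow x=\uparrow\{x\}$. $A^\uparrow$ and $A^\downarrow$ are the sets of upper and lower bounds of $A$, and $A^\delta=(A^\uparrow)^\downarrow$. A nonempty $A\subseteq X$ is irreducible if whenever $A\subseteq F_1\cup F_2$ with $F_1,F_2$ closed, $A\subseteq F_1$ or $A\subseteq F_2$. $P_S(X)$ is the set of nonempty compact saturated (upper) subsets of $X$ with the upper Vietoris topology, having basis $\{\square V: V \text{ open}\}$, $\square V=\{Q: Q\subseteq V\}$ (for finite $F$, $\uparrow F$ is such a set). A subset $U\subseteq X$ is $SI_2$-open if $U$ is open and for every irreducible $F\subseteq X$, $F^\delta\cap U\neq\emptyset$ implies $F\cap U\ne\emptyset$. *)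

theory Defs
  imports "HOL-Analysis.Analysis"
begin

definition spec_le :: "'a topology \<Rightarrow> 'a \<Rightarrow> 'a \<Rightarrow> bool" where
  "spec_le X x y \<longleftrightarrow> x \<in> topspace X \<and> y \<in> topspace X \<and> x \<in> X closure_of {y}"

definition up_set :: "'a topology \<Rightarrow> 'a set \<Rightarrow> 'a set" where
  "up_set X A = {x \<in> topspace X. \<exists>a\<in>A. spec_le X a x}"

definition upper_bounds :: "'a topology \<Rightarrow> 'a set \<Rightarrow> 'a set" where
  "upper_bounds X A = {u \<in> topspace X. \<forall>a\<in>A. spec_le X a u}"

definition lower_bounds :: "'a topology \<Rightarrow> 'a set \<Rightarrow> 'a set" where
  "lower_bounds X A = {l \<in> topspace X. \<forall>a\<in>A. spec_le X l a}"

definition cut_delta :: "'a topology \<Rightarrow> 'a set \<Rightarrow> 'a set" where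
  "cut_delta X A = lower_bounds X (upper_bounds X A)"

definition irreducible_in :: "'a topology \<Rightarrow> 'a set \<Rightarrow> bool" where
  "irreducible_in X A \<longleftrightarrow> A \<noteq> {} \<and> A \<subseteq> topspace X \<and>
     (\<forall>F1 F2. closedin X F1 \<and> closedin X F2 \<and> A \<subseteq> F1 \<union> F2 \<longrightarrow> A \<subseteq> F1 \<or> A \<subseteq> F2)"

definition SI2_open :: "'a topology \<Rightarrow> 'a set \<Rightarrow> bool" where
  "SI2_open X U \<longleftrightarrow> openin X U \<and>
     (\<forall>F. irreducible_in X F \<longrightarrow> cut_delta X F \<inter> U \<noteq> {} \<longrightarrow> F \<inter> U \<noteq> {})"

definition QS :: "'a topology \<Rightarrow> 'a set set" where
  "QS X = {Q. Q \<noteq> {} \<and> compactin X Q \<and> up_set X Q = Q}"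

definition box_set :: "'a topology \<Rightarrow> 'a set \<Rightarrow> 'a set set" where
  "box_set X V = {Q \<in> QS X. Q \<subseteq> V}"

definition smyth_space :: "'a topology \<Rightarrow> 'a set topology" where
  "smyth_space X = topology_generated_by {box_set X V | V. openin X V}"

end

theory Submission
  imports Defs
begin

lemma spec_refl: "a \<in> topspace X \<Longrightarrow> spec_le X a a"
  unfolding spec_le_def by (simp add: closure_of_eq_empty_gen in_closure_of)

lemma spec_trans: "spec_le X a b \<Longrightarrow> spec_le X b c \<Longrightarrow> spec_le X a c"
  unfolding spec_le_def
  by (meson closedin_closure_of closure_of_minimal empty_subsetI insert_subset subsetD)

lemma closed_lower: "closedin X C \<Longrightarrow> a \<in> C \<Longrightarrow> spec_le X f a \<Longrightarrow> f \<in> C"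
  unfolding spec_le_def
  by (meson closure_of_minimal empty_subsetI insert_subset subsetD)

lemma smyth_topspace: "topspace (smyth_space X) = QS X"
proof -
  have "box_set X (topspace X) = QS X"
    unfolding box_set_def QS_def using compactin_subset_topspace by blast
  then show ?thesis unfolding smyth_space_def topology_generated_by_topspace
    unfolding box_set_def by auto
qed

lemma smyth_closed: "openin X V \<Longrightarrow> closedin (smyth_space X) (QS X - box_set X V)"
proof -
  assume "openin X V"
  then have "openin (smyth_space X) (box_set X V)"
    unfolding smyth_space_def by (intro topology_generated_by_Basis) blast
  then show ?thesis
    using closedin_diff closedin_topspace smyth_topspace by metis
qed

lemma irrD: "irreducible_in X A \<Longrightarrow> closedin X F1 \<Longrightarrow> closedin X F2 \<Longrightarrow> A \<subseteq> F1 \<union> F2 \<Longrightarrow> A \<subseteq> F1 \<or> A \<subseteq> F2"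
  unfolding irreducible_in_def by blast

lemma SI2D: "SI2_open X U \<Longrightarrow> irreducible_in X F \<Longrightarrow> cut_delta X F \<inter> U \<noteq> {} \<Longrightarrow> F \<inter> U \<noteq> {}"
  unfolding SI2_open_def by blast

lemma sub_up: "F \<subseteq> topspace X \<Longrightarrow> F \<subseteq> up_set X F"
proof
  fix f assume "F \<subseteq> topspace X" "f \<in> F"
  then have "f \<in> topspace X" by blast
  then show "f \<in> up_set X F" unfolding up_set_def using spec_refl[of f X] \<open>f \<in> F\<close> by blast
qed

theorem proposition2p9:
  fixes X :: "'a topology" and U :: "'a set" and x :: 'a and \<F> :: "'a set set"
  assumes "t0_space X"
    and "SI2_open X U"
    and "x \<in> topspace X"
    and "\<forall>A\<in>\<F>. \<exists>F. finite F \<and> F \<noteq> {} \<and> F \<subseteq> topspace X \<and> A = up_set X F"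
    and "irreducible_in (smyth_space X) \<F>"
    and "\<Inter>\<F> \<subseteq> up_set X {x}"
    and "up_set X {x} \<subseteq> U"
  shows "\<exists>F. finite F \<and> F \<noteq> {} \<and> F \<subseteq> topspace X \<and> up_set X F \<in> \<F> \<and> F \<subseteq> U"
proof (rule ccontr)
  assume neg: "\<not> ?thesis"
  have Uo: "openin X U" using assms(2) SI2_open_def by blast
  have FQ: "\<F> \<subseteq> QS X" "\<F> \<noteq> {}" using assms(5) smyth_topspace[of X] unfolding irreducible_in_def by simp_all
  have Qtop: "Q \<subseteq> topspace X" if "Q \<in> \<F>" for Q
    using that FQ unfolding QS_def using compactin_subset_topspace by blast
  have meetF: "C \<inter> F \<noteq> {}" if "closedin X C" "C \<inter> up_set X F \<noteq> {}" for C F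
  proof -
    from that(2) obtain a f where "a \<in> C" "f \<in> F" "spec_le X f a" unfolding up_set_def by blast
    then show ?thesis using closed_lower[OF that(1)] by blast
  qed
  define \<W> where "\<W> = {W. openin X W \<and> U \<subseteq> W \<and> (\<forall>Q\<in>\<F>. (topspace X - W) \<inter> Q \<noteq> {})}"
  have U\<W>: "U \<in> \<W>"
    unfolding \<W>_def
  proof (intro CollectI conjI Uo subset_refl ballI)
    fix Q assume "Q \<in> \<F>"
    then obtain F where F: "finite F" "F \<noteq> {}" "F \<subseteq> topspace X" "Q = up_set X F"
      using assms(4) by blast
    have "\<not> F \<subseteq> U" using neg F \<open>Q \<in> \<F>\<close> by auto
    then obtain f where "f \<in> F" "f \<notin> U" by blast
    have "f \<in> topspace X" using F(3) \<open>f \<in> F\<close> by blast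
    then have "spec_le X f f" by (rule spec_refl)
    then have "f \<in> Q" using F(4) \<open>f \<in> F\<close> \<open>f \<in> topspace X\<close> unfolding up_set_def by blast
    then show "(topspace X - U) \<inter> Q \<noteq> {}" using \<open>f \<in> F\<close> \<open>f \<notin> U\<close> F by blast
  qed
  have "\<exists>M\<in>\<W>. \<forall>W\<in>\<W>. M \<subseteq> W \<longrightarrow> W = M"
  proof (rule Zorn_Lemma2, rule ballI)
    fix \<C> assume C: "\<C> \<in> chains \<W>"
    show "\<exists>V\<in>\<W>. \<forall>W\<in>\<C>. W \<subseteq> V"
    proof (cases "\<C> = {}")
      case True then show ?thesis using U\<W> by blast
    next
      case False
      have sub: "\<C> \<subseteq> \<W>" and ch: "subset.chain \<W> \<C>"
        using C by (auto simp: chains_def chain_subset_def subset.chain_def)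
      have "\<Union>\<C> \<in> \<W>"
        unfolding \<W>_def
      proof (intro CollectI conjI ballI)
        show "openin X (\<Union>\<C>)" using sub \<W>_def by auto
        show "U \<subseteq> \<Union>\<C>" using sub \<W>_def False by auto
        fix Q assume "Q \<in> \<F>"
        then obtain F where F: "finite F" "F \<noteq> {}" "F \<subseteq> topspace X" "Q = up_set X F"
          using assms(4) by blast
        show "(topspace X - \<Union>\<C>) \<inter> Q \<noteq> {}"
        proof
          assume e: "(topspace X - \<Union>\<C>) \<inter> Q = {}"
          have "F \<subseteq> Q" using sub_up[OF F(3)] F(4) by simp
          then have "F \<subseteq> \<Union>\<C>" using e F(3) by blast
          then obtain B where B: "B \<in> \<C>" "F \<subseteq> B"
            using finite_subset_Union_chain[OF F(1) _ False ch] by metis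
          then have "B \<in> \<W>" using sub by blast
          then have "openin X B" "(topspace X - B) \<inter> Q \<noteq> {}"
            using \<open>Q \<in> \<F>\<close> unfolding \<W>_def by auto
          moreover have "closedin X (topspace X - B)" using \<open>openin X B\<close> by (simp add: closedin_diff)
          ultimately have "(topspace X - B) \<inter> F \<noteq> {}"
            using meetF[of "topspace X - B" F] F(4) by simp
          then show False using B by blast
        qed
      qed
      then show ?thesis by blast
    qed
  qed
  then obtain M where M: "M \<in> \<W>" and Mmax: "\<And>W. W \<in> \<W> \<Longrightarrow> M \<subseteq> W \<Longrightarrow> W = M" by blast
  define C where "C = topspace X - M"
  have Mo: "openin X M" and UM: "U \<subseteq> M" and CQ: "\<And>Q. Q \<in> \<F> \<Longrightarrow> C \<inter> Q \<noteq> {}"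
    using M unfolding \<W>_def C_def by auto
  have Cc: "closedin X C" unfolding C_def using Mo by blast
  have irr: "irreducible_in X C"
    unfolding irreducible_in_def
  proof (intro conjI allI impI)
    show "C \<noteq> {}" using CQ FQ(2) by blast
    show "C \<subseteq> topspace X" unfolding C_def by blast
    fix F1 F2 assume H: "closedin X F1 \<and> closedin X F2 \<and> C \<subseteq> F1 \<union> F2"
    show "C \<subseteq> F1 \<or> C \<subseteq> F2"
    proof (rule ccontr)
      assume nn: "\<not> (C \<subseteq> F1 \<or> C \<subseteq> F2)"
      define B1 where "B1 = C \<inter> F1"
      define B2 where "B2 = C \<inter> F2"
      have Bc: "closedin X B1" "closedin X B2" using H Cc B1_def B2_def by auto
      have ex: "\<exists>Q\<in>\<F>. B \<inter> Q = {}" if "closedin X B" "B \<subseteq> C" "B \<noteq> C" for B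
      proof (rule ccontr)
        assume "\<not> ?thesis"
        have tb: "topspace X - (topspace X - B) = B" using closedin_subset[OF that(1)] by blast
        have "openin X (topspace X - B)" using that(1) by (simp add: openin_diff)
        moreover have "U \<subseteq> topspace X - B" using that(2) UM C_def openin_subset[OF Uo] by blast
        moreover have "\<forall>Q\<in>\<F>. (topspace X - (topspace X - B)) \<inter> Q \<noteq> {}"
          unfolding tb using \<open>\<not> (\<exists>Q\<in>\<F>. B \<inter> Q = {})\<close> by blast
        ultimately have "topspace X - B \<in> \<W>"
          unfolding \<W>_def by blast
        moreover have "M \<subseteq> topspace X - B" using that C_def openin_subset[OF Mo] by blast
        ultimately have "topspace X - B = M" using Mmax by blast
        then show False using that C_def closedin_subset by blast
      qed
      obtain Q1 where Q1: "Q1 \<in> \<F>" "B1 \<inter> Q1 = {}" using ex[OF Bc(1)] nn B1_def by blast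
      obtain Q2 where Q2: "Q2 \<in> \<F>" "B2 \<inter> Q2 = {}" using ex[OF Bc(2)] nn B2_def by blast
      have K: "closedin (smyth_space X) (QS X - box_set X (topspace X - B1))"
              "closedin (smyth_space X) (QS X - box_set X (topspace X - B2))"
        using smyth_closed[OF openin_diff[OF openin_topspace Bc(1)]] smyth_closed[OF openin_diff[OF openin_topspace Bc(2)]]
        by auto
      have "\<F> \<subseteq> (QS X - box_set X (topspace X - B1)) \<union> (QS X - box_set X (topspace X - B2))"
      proof
        fix Q assume "Q \<in> \<F>"
        then have "C \<inter> Q \<noteq> {}" by (rule CQ)
        then have "B1 \<inter> Q \<noteq> {} \<or> B2 \<inter> Q \<noteq> {}" using H B1_def B2_def by blast
        then show "Q \<in> (QS X - box_set X (topspace X - B1)) \<union> (QS X - box_set X (topspace X - B2))"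
          using FQ \<open>Q \<in> \<F>\<close> unfolding box_set_def by blast
      qed
      then have "\<F> \<subseteq> QS X - box_set X (topspace X - B1) \<or> \<F> \<subseteq> QS X - box_set X (topspace X - B2)"
        by (rule irrD[OF assms(5) K])
      moreover have "Q1 \<in> box_set X (topspace X - B1)" "Q2 \<in> box_set X (topspace X - B2)"
        using Q1 Q2 FQ Qtop unfolding box_set_def by blast+
      ultimately show False using Q1 Q2 by blast
    qed
  qed
  have "x \<in> cut_delta X C"
    unfolding cut_delta_def lower_bounds_def
  proof (intro CollectI conjI ballI assms(3))
    fix u assume u: "u \<in> upper_bounds X C"
    have "u \<in> \<Inter>\<F>"
    proof
      fix Q assume "Q \<in> \<F>"
      then obtain F where F: "finite F" "F \<noteq> {}" "F \<subseteq> topspace X" "Q = up_set X F"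
        using assms(4) by blast
      obtain a where a: "a \<in> C" "a \<in> Q" using CQ[OF \<open>Q \<in> \<F>\<close>] by blast
      then obtain f where f: "f \<in> F" "spec_le X f a" using F(4) unfolding up_set_def by auto
      have au: "spec_le X a u" "u \<in> topspace X" using u a(1) unfolding upper_bounds_def by auto
      have "spec_le X f u" using spec_trans[OF f(2) au(1)] .
      then show "u \<in> Q" unfolding F(4) up_set_def using f(1) au(2) by blast
    qed
    then show "spec_le X x u" using assms(6) unfolding up_set_def by blast
  qed
  moreover have "x \<in> U" using assms(7) spec_refl[OF assms(3)] assms(3) unfolding up_set_def by blast
  ultimately have "C \<inter> U \<noteq> {}" using SI2D[OF assms(2) irr] by blast
  then show False using UM C_def by blast
qed

end
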